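(* Let $(\zeta_j)_{j\in\mathbb Z}$ be i.i.d. positive random variables with finite mean $\mu$, $\omega_0:=0$, $\omega_k:=\omega_{k-1}+\zeta_k$ ($k\in\mathbb Z$), with law $P$. Let $(\xi_i)_{i\ge1}$ be i.i.d. $\mathbb Z$-valued with density $(p_k)$ satisfying $p_k=p_{-k}$, $p_{k+1}\le p_k$ for $k\ge0$, and $\sum_kk^2p_k\in(0,\infty)$; $S_0:=0$, $S_n:=\sum_{i=1}^n\xi_i$, with law $Q$, and $m_2:=\lim_nE_Q(S_n^2)/n$. For fixed $\omega$ let $Y_n:=\omega_{S_n}$ and let $Q_\omega$ be the law of $(Y_n)$ induced by $Q$. Then for $P$-a.e. $\omega$, $Y_n/\sqrt n\to\mathcal N(0,\mu^2m_2)$ in distribution under $Q_\omega$ as $n\to\infty$.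
   Context: $\mathcal N(0,\sigma^2)$ is the centered normal law with variance $\sigma^2$. *)

theory Defs
  imports "HOL-Probability.Probability"
begin

definition env :: "(int \<Rightarrow> 'a \<Rightarrow> real) \<Rightarrow> 'a \<Rightarrow> int \<Rightarrow> real" where
  "env \<zeta> x k = (if k \<ge> 0 then (\<Sum>j\<in>{1..k}. \<zeta> j x) else - (\<Sum>j\<in>{k+1..0}. \<zeta> j x))"

definition walk :: "(nat \<Rightarrow> 'b \<Rightarrow> int) \<Rightarrow> nat \<Rightarrow> 'b \<Rightarrow> int" where
  "walk \<xi> n y = (\<Sum>i\<in>{1..n}. \<xi> i y)"

end

theory Submission
  imports Defs
begin

lemma cesaro:
  fixes a :: "nat \<Rightarrow> real"
  assumes "a \<longlonglongrightarrow> L"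
  shows "(\<lambda>n. (\<Sum>i<n. a i) / real n) \<longlonglongrightarrow> L"
proof (rule LIMSEQ_I)
  fix r :: real assume r: "r > 0"
  obtain N where N: "\<And>n. n \<ge> N \<Longrightarrow> norm (a n - L) < r/2"
    using LIMSEQ_D[OF assms, of "r/2"] r by auto
  define B where "B = (\<Sum>i<N. norm (a i - L))"
  have "(\<lambda>n. B / real n) \<longlonglongrightarrow> 0" by (rule lim_const_over_n)
  then obtain N2 where N2: "\<And>n. n \<ge> N2 \<Longrightarrow> norm (B / real n) < r/2"
    using LIMSEQ_D[of _ 0 "r/2"] r by force
  show "\<exists>no. \<forall>n\<ge>no. norm ((\<Sum>i<n. a i) / real n - L) < r"
  proof (intro exI allI impI)
    fix n assume n: "n \<ge> max (Suc N) N2"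
    hence npos: "real n > 0" by simp
    have eq: "(\<Sum>i<n. a i) / real n - L = (\<Sum>i<n. a i - L) / real n"
      using npos by (simp add: sum_subtractf field_simps)
    have split: "{..<n} = {..<N} \<union> {N..<n}" using n by auto
    have "norm (\<Sum>i<n. a i - L) \<le> (\<Sum>i<n. norm (a i - L))" by (rule norm_sum)
    also have "\<dots> = B + (\<Sum>i\<in>{N..<n}. norm (a i - L))"
      unfolding B_def split by (subst sum.union_disjoint) auto
    also have "(\<Sum>i\<in>{N..<n}. norm (a i - L)) \<le> (\<Sum>i\<in>{N..<n}. r/2)"
      using N by (intro sum_mono) (simp add: less_imp_le)
    also have "\<dots> \<le> real n * (r/2)" using r by simp
    finally have "norm (\<Sum>i<n. a i - L) \<le> B + real n * (r/2)" by simp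
    hence "norm ((\<Sum>i<n. a i - L) / real n) \<le> B / real n + r/2"
      using npos by (simp add: field_simps norm_divide)
    also have "B / real n < r/2" using N2[of n] n by (simp add: abs_less_iff B_def sum_nonneg)
    finally show "norm ((\<Sum>i<n. a i) / real n - L) < r" using eq by simp
  qed
qed


definition kseq :: "real \<Rightarrow> nat \<Rightarrow> nat" where
  "kseq \<alpha> m = nat \<lfloor>\<alpha> ^ m\<rfloor>"

lemma kseq_bounds:
  assumes "\<alpha> > 1"
  shows "real (kseq \<alpha> m) \<le> \<alpha> ^ m" "real (kseq \<alpha> m) > \<alpha> ^ m - 1"
    "real (kseq \<alpha> m) \<ge> 1" "kseq \<alpha> m > 0" "2 * real (kseq \<alpha> m) \<ge> \<alpha> ^ m"
proof -
  have a1: "\<alpha> ^ m \<ge> 1" using assms by (simp add: one_le_power)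
  hence f1: "\<lfloor>\<alpha> ^ m\<rfloor> \<ge> 1" by (simp add: le_floor_iff)
  have e: "real (kseq \<alpha> m) = real_of_int \<lfloor>\<alpha> ^ m\<rfloor>" using f1 by (simp add: kseq_def)
  show "real (kseq \<alpha> m) \<le> \<alpha> ^ m" unfolding e by simp
  show g: "real (kseq \<alpha> m) > \<alpha> ^ m - 1" unfolding e by linarith
  show g1: "real (kseq \<alpha> m) \<ge> 1" unfolding e using f1 by simp
  thus "kseq \<alpha> m > 0" by simp
  show "2 * real (kseq \<alpha> m) \<ge> \<alpha> ^ m" using g g1 by linarith
qed

lemma kseq_at_top:
  assumes "\<alpha> > 1"
  shows "filterlim (kseq \<alpha>) at_top sequentially"
proof -
  have "filterlim (\<lambda>m. \<alpha> ^ m) at_top sequentially"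
    using assms by (intro filterlim_at_infinity_imp_filterlim_at_top filterlim_realpow_sequentially_gt1) auto
  hence "filterlim (\<lambda>m. -1 + \<alpha> ^ m) at_top sequentially"
    by (intro filterlim_tendsto_add_at_top[OF tendsto_const])
  hence "filterlim (\<lambda>m. real (kseq \<alpha> m)) at_top sequentially"
    by (rule filterlim_at_top_mono) (use kseq_bounds[OF assms] in \<open>auto intro!: always_eventually less_imp_le simp: algebra_simps\<close>)
  thus ?thesis by (simp add: filterlim_real_sequentially filterlim_sequentially_iff_filterlim_real)
qed

lemma kseq_ratio:
  assumes a: "\<alpha> > 1"
  shows "(\<lambda>m. real (kseq \<alpha> (Suc m)) / real (kseq \<alpha> m)) \<longlonglongrightarrow> \<alpha>"
proof -
  have p: "(\<lambda>m. (1/\<alpha>) ^ m) \<longlonglongrightarrow> 0" using a by (intro LIMSEQ_power_zero) auto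
  have lo: "(\<lambda>m. 1 - (1/\<alpha>) ^ m) \<longlonglongrightarrow> 1" using tendsto_diff[OF tendsto_const p, of 1] by simp
  have r: "(\<lambda>m. real (kseq \<alpha> m) / \<alpha> ^ m) \<longlonglongrightarrow> 1"
  proof (rule tendsto_sandwich[OF _ _ lo tendsto_const])
    show "\<forall>\<^sub>F m in sequentially. 1 - (1/\<alpha>) ^ m \<le> real (kseq \<alpha> m) / \<alpha> ^ m"
    proof (intro always_eventually allI)
      fix m
      have pos: "\<alpha> ^ m > 0" using a by simp
      have "1 - (1/\<alpha>) ^ m = (\<alpha> ^ m - 1) / \<alpha> ^ m" using pos a by (simp add: power_divide diff_divide_distrib)
      also have "\<dots> \<le> real (kseq \<alpha> m) / \<alpha> ^ m"
        using kseq_bounds(2)[OF a, of m] pos by (intro divide_right_mono) auto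
      finally show "1 - (1/\<alpha>) ^ m \<le> real (kseq \<alpha> m) / \<alpha> ^ m" .
    qed
    show "\<forall>\<^sub>F m in sequentially. real (kseq \<alpha> m) / \<alpha> ^ m \<le> 1"
      using kseq_bounds(1)[OF a] a by (intro always_eventually allI) (simp add: divide_le_eq_1)
  qed
  have r2: "(\<lambda>m. real (kseq \<alpha> (Suc m)) / \<alpha> ^ (Suc m)) \<longlonglongrightarrow> 1"
    using r by (rule LIMSEQ_Suc)
  have lim: "(\<lambda>m. (real (kseq \<alpha> (Suc m)) / \<alpha> ^ (Suc m)) * \<alpha> / (real (kseq \<alpha> m) / \<alpha> ^ m)) \<longlonglongrightarrow> 1 * \<alpha> / 1"
    by (intro tendsto_intros r r2) auto
  have eq: "(\<lambda>m. (real (kseq \<alpha> (Suc m)) / \<alpha> ^ (Suc m)) * \<alpha> / (real (kseq \<alpha> m) / \<alpha> ^ m))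
      = (\<lambda>m. real (kseq \<alpha> (Suc m)) / real (kseq \<alpha> m))"
  proof
    fix m show "(real (kseq \<alpha> (Suc m)) / \<alpha> ^ (Suc m)) * \<alpha> / (real (kseq \<alpha> m) / \<alpha> ^ m)
      = real (kseq \<alpha> (Suc m)) / real (kseq \<alpha> m)"
      using a kseq_bounds(4)[OF a, of m] by (simp add: field_simps)
  qed
  show ?thesis using lim unfolding eq by simp
qed

lemma interp1:
  fixes T :: "nat \<Rightarrow> real" and k :: "nat \<Rightarrow> nat"
  assumes mono: "mono T" and nonneg: "\<And>n. T n \<ge> 0"
    and kpos: "\<And>m. k m > 0" and klim: "filterlim k at_top sequentially"
    and conv: "(\<lambda>m. T (k m) / real (k m)) \<longlonglongrightarrow> L"
    and ratio: "(\<lambda>m. real (k (Suc m)) / real (k m)) \<longlonglongrightarrow> \<alpha>" and apos: "\<alpha> > 0"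
    and dpos: "\<delta> > 0"
  shows "eventually (\<lambda>n. T n / real n < L * \<alpha> + \<delta> \<and> T n / real n > L / \<alpha> - \<delta>) sequentially"
proof -
  define u where "u m = T (k (Suc m)) / real (k m)" for m
  define l where "l m = T (k m) / real (k (Suc m))" for m
  have "(\<lambda>m. T (k (Suc m)) / real (k (Suc m)) * (real (k (Suc m)) / real (k m))) \<longlonglongrightarrow> L * \<alpha>"
    by (intro tendsto_mult ratio LIMSEQ_Suc[OF conv])
  moreover have "T (k (Suc m)) / real (k (Suc m)) * (real (k (Suc m)) / real (k m)) = u m" for m
    using kpos[of "Suc m"] by (simp add: u_def)
  ultimately have ul: "u \<longlonglongrightarrow> L * \<alpha>" by simp
  have "(\<lambda>m. (T (k m) / real (k m)) / (real (k (Suc m)) / real (k m))) \<longlonglongrightarrow> L / \<alpha>"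
    using apos by (intro tendsto_divide ratio conv) auto
  moreover have "(T (k m) / real (k m)) / (real (k (Suc m)) / real (k m)) = l m" for m
    using kpos[of m] by (simp add: l_def)
  ultimately have ll: "l \<longlonglongrightarrow> L / \<alpha>" by simp
  have "eventually (\<lambda>m. u m < L * \<alpha> + \<delta> \<and> l m > L / \<alpha> - \<delta>) sequentially"
    using order_tendstoD(2)[OF ul, of "L * \<alpha> + \<delta>"] order_tendstoD(1)[OF ll, of "L / \<alpha> - \<delta>"] dpos
    by (auto elim: eventually_elim2)
  then obtain M where M: "\<And>m. m \<ge> M \<Longrightarrow> u m < L * \<alpha> + \<delta> \<and> l m > L / \<alpha> - \<delta>"
    by (auto simp: eventually_sequentially)
  define N where "N = Max (k ` {..M})"
  have kN: "m \<le> M \<Longrightarrow> k m \<le> N" for m unfolding N_def by (intro Max_ge) auto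
  show ?thesis unfolding eventually_sequentially
  proof (intro exI allI impI)
    fix n assume n: "n \<ge> N"
    have npos: "n > 0" using kN[of 0] kpos[of 0] n by simp
    have "eventually (\<lambda>m. Suc n \<le> k m) sequentially" using klim by (simp add: filterlim_at_top)
    hence ex: "\<exists>m. n < k m" unfolding eventually_sequentially by (metis Suc_le_lessD order.refl)
    define m' where "m' = (LEAST m. n < k m)"
    have m'1: "n < k m'" unfolding m'_def using ex by (rule LeastI_ex)
    have m'2: "m < m' \<Longrightarrow> k m \<le> n" for m unfolding m'_def using not_less_Least by fastforce
    have "m' > M" proof (rule ccontr)
      assume "\<not> m' > M" hence "k m' \<le> N" using kN by simp
      thus False using m'1 n by simp
    qed
    then obtain m where mm: "m' = Suc m" "m \<ge> M" by (cases m') auto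
    have km: "k m \<le> n" "n < k (Suc m)" using m'1 m'2[of m] mm by auto
    have "T n / real n \<le> T (k (Suc m)) / real n"
      using mono km npos by (intro divide_right_mono) (auto simp: mono_def)
    also have "\<dots> \<le> T (k (Suc m)) / real (k m)"
      using km kpos[of m] nonneg by (intro divide_left_mono) auto
    also have "\<dots> < L * \<alpha> + \<delta>" using M[OF mm(2)] by (simp add: u_def)
    finally have up: "T n / real n < L * \<alpha> + \<delta>" .
    have "L / \<alpha> - \<delta> < T (k m) / real (k (Suc m))" using M[OF mm(2)] by (simp add: l_def)
    also have "\<dots> \<le> T (k m) / real n"
      using km npos nonneg by (intro divide_left_mono) auto
    also have "\<dots> \<le> T n / real n"
      using mono km npos by (intro divide_right_mono) (auto simp: mono_def)
    finally show "T n / real n < L * \<alpha> + \<delta> \<and> T n / real n > L / \<alpha> - \<delta>" using up by simp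
  qed
qed

lemma interp:
  fixes T :: "nat \<Rightarrow> real" and \<alpha> :: "nat \<Rightarrow> real"
  assumes mono: "mono T" and nonneg: "\<And>n. T n \<ge> 0"
    and a1: "\<And>j. \<alpha> j > 1" and alim: "\<alpha> \<longlonglongrightarrow> 1"
    and conv: "\<And>j. (\<lambda>m. T (kseq (\<alpha> j) m) / real (kseq (\<alpha> j) m)) \<longlonglongrightarrow> L"
  shows "(\<lambda>n. T n / real n) \<longlonglongrightarrow> L"
proof (rule order_tendstoI)
  fix b assume b: "L < b"
  have "(\<lambda>j. L * \<alpha> j) \<longlonglongrightarrow> L * 1" by (intro tendsto_intros alim)
  hence "eventually (\<lambda>j. L * \<alpha> j < b) sequentially" using b by (intro order_tendstoD) auto
  then obtain j where j: "L * \<alpha> j < b" by (auto simp: eventually_sequentially)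
  have "eventually (\<lambda>n. T n / real n < L * \<alpha> j + (b - L * \<alpha> j) \<and> T n / real n > L / \<alpha> j - (b - L * \<alpha> j)) sequentially"
    using a1[of j] j by (intro interp1[OF mono nonneg kseq_bounds(4)[OF a1] kseq_at_top[OF a1] conv kseq_ratio[OF a1]]) auto
  thus "eventually (\<lambda>n. T n / real n < b) sequentially" by eventually_elim simp
next
  fix a assume a: "a < L"
  have "(\<lambda>j. L / \<alpha> j) \<longlonglongrightarrow> L / 1" by (intro tendsto_intros alim) auto
  hence "eventually (\<lambda>j. L / \<alpha> j > a) sequentially" using a by (intro order_tendstoD) auto
  then obtain j where j: "L / \<alpha> j > a" by (auto simp: eventually_sequentially)
  have "eventually (\<lambda>n. T n / real n < L * \<alpha> j + (L / \<alpha> j - a) \<and> T n / real n > L / \<alpha> j - (L / \<alpha> j - a)) sequentially"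
    using a1[of j] j by (intro interp1[OF mono nonneg kseq_bounds(4)[OF a1] kseq_at_top[OF a1] conv kseq_ratio[OF a1]]) auto
  thus "eventually (\<lambda>n. T n / real n > a) sequentially" by eventually_elim simp
qed


lemma geom:
  assumes a: "\<alpha> > 1" and v: "v > 0"
  shows "summable (\<lambda>m. if v \<le> real (kseq \<alpha> m) then 1 / real (kseq \<alpha> m) else 0)"
    and "(\<Sum>m. if v \<le> real (kseq \<alpha> m) then 1 / real (kseq \<alpha> m) else 0) \<le> 2 * \<alpha> / ((\<alpha> - 1) * v)"
proof -
  define f where "f m = (if v \<le> real (kseq \<alpha> m) then 1 / real (kseq \<alpha> m) else 0)" for m
  have ex: "\<exists>m. v \<le> \<alpha> ^ m" using real_arch_pow[OF a, of v] by (auto intro: less_imp_le)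
  define m0 where "m0 = (LEAST m. v \<le> \<alpha> ^ m)"
  have m0: "v \<le> \<alpha> ^ m0" unfolding m0_def using ex by (rule LeastI_ex)
  define h where "h m = (if m0 \<le> m then 2 / \<alpha> ^ m else 0)" for m
  have fh: "norm (f m) \<le> h m" for m
  proof (cases "v \<le> real (kseq \<alpha> m)")
    case True
    hence "v \<le> \<alpha> ^ m" using kseq_bounds(1)[OF a, of m] by simp
    hence "m0 \<le> m" unfolding m0_def by (rule Least_le)
    moreover have "1 / real (kseq \<alpha> m) \<le> 2 / \<alpha> ^ m"
      using kseq_bounds(3,5)[OF a, of m] a by (simp add: field_simps)
    ultimately show ?thesis using True kseq_bounds(3)[OF a, of m] by (simp add: f_def h_def)
  next
    case False thus ?thesis using a by (simp add: f_def h_def)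
  qed
  define H where "H = 2 / \<alpha> ^ m0 * (1 / (1 - 1/\<alpha>))"
  have "(\<lambda>j. 2 / \<alpha> ^ m0 * (1/\<alpha>) ^ j) sums H"
    unfolding H_def using a by (intro sums_mult geometric_sums) auto
  moreover have "(\<lambda>j. h (j + m0)) = (\<lambda>j. 2 / \<alpha> ^ m0 * (1/\<alpha>) ^ j)"
    by (auto simp: h_def power_add power_divide)
  ultimately have "(\<lambda>j. h (j + m0)) sums H" by simp
  hence hs: "h sums H" by (subst (asm) sums_zero_iff_shift) (auto simp: h_def)
  show "summable (\<lambda>m. if v \<le> real (kseq \<alpha> m) then 1 / real (kseq \<alpha> m) else 0)"
    using summable_comparison_test[OF _ sums_summable[OF hs], of f] fh unfolding f_def by auto
  hence "suminf f \<le> suminf h" using fh sums_summable[OF hs] unfolding f_def[symmetric]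
    by (intro suminf_le) (auto intro: order_trans[OF abs_ge_self])
  also have "suminf h = H" using hs by (rule sums_unique[symmetric])
  also have "H \<le> 2 * \<alpha> / ((\<alpha> - 1) * v)"
  proof -
    have "H = 2 * \<alpha> / ((\<alpha> - 1) * \<alpha> ^ m0)" using a by (simp add: H_def field_simps)
    also have "\<dots> \<le> 2 * \<alpha> / ((\<alpha> - 1) * v)" using a v m0
      by (intro divide_left_mono mult_left_mono mult_pos_pos) auto
    finally show ?thesis .
  qed
  finally show "(\<Sum>m. if v \<le> real (kseq \<alpha> m) then 1 / real (kseq \<alpha> m) else 0) \<le> 2 * \<alpha> / ((\<alpha> - 1) * v)"
    unfolding f_def .
qed


definition tr :: "nat \<Rightarrow> real \<Rightarrow> real" where
  "tr i v = (if v \<le> real (Suc i) then v else 0)"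

lemma tr_measurable[measurable]: "tr i \<in> borel_measurable borel"
  unfolding tr_def by measurable

lemma tr_bounds: "0 \<le> v \<Longrightarrow> 0 \<le> tr i v" "0 \<le> v \<Longrightarrow> tr i v \<le> v" "tr i v \<le> real (Suc i)"
  by (auto simp: tr_def)

lemma card_int_le: "card ({..<N} \<inter> S) \<le> N"
  by (metis card_lessThan Int_lower1 card_mono finite_lessThan)

locale slln = prob_space +
  fixes X :: "nat \<Rightarrow> 'a \<Rightarrow> real"
  assumes indep: "indep_vars (\<lambda>_. borel) X UNIV"
    and ident: "\<And>i. distr M borel (X i) = distr M borel (X 0)"
    and nonneg: "\<And>i x. x \<in> space M \<Longrightarrow> X i x \<ge> 0"
    and int0: "integrable M (X 0)"
begin

lemma rv[measurable]: "X i \<in> borel_measurable M"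
  using indep unfolding indep_vars_def2 by auto

lemma ident_integral:
  fixes g :: "real \<Rightarrow> real"
  assumes [measurable]: "g \<in> borel_measurable borel"
  shows "(\<integral>x. g (X i x) \<partial>M) = (\<integral>x. g (X 0 x) \<partial>M)"
proof -
  have "(\<integral>x. g (X i x) \<partial>M) = integral\<^sup>L (distr M borel (X i)) g" using integral_distr[of "X i" M borel g] by simp
  also have "\<dots> = integral\<^sup>L (distr M borel (X 0)) g" by (simp only: ident[of i])
  also have "\<dots> = (\<integral>x. g (X 0 x) \<partial>M)" using integral_distr[of "X 0" M borel g] by simp
  finally show ?thesis .
qed

lemma ident_prob:
  assumes [measurable]: "A \<in> sets borel"
  shows "prob {x \<in> space M. X i x \<in> A} = prob {x \<in> space M. X 0 x \<in> A}"
proof -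
  have e: "\<And>j. X j -` A \<inter> space M = {x \<in> space M. X j x \<in> A}" by auto
  have m: "\<And>j. measure (distr M borel (X j)) A = prob {x \<in> space M. X j x \<in> A}"
    unfolding e[symmetric] by (rule measure_distr) auto
  have "prob {x \<in> space M. X i x \<in> A} = measure (distr M borel (X i)) A"
    by (rule m[symmetric])
  also have "\<dots> = measure (distr M borel (X 0)) A" by (simp only: ident[of i])
  also have "\<dots> = prob {x \<in> space M. X 0 x \<in> A}"
    by (rule m)
  finally show ?thesis .
qed

definition Y :: "nat \<Rightarrow> 'a \<Rightarrow> real" where "Y i x = tr i (X i x)"

lemma Y_measurable[measurable]: "Y i \<in> borel_measurable M"
  unfolding Y_def by measurable

lemma Y_bounds: "x \<in> space M \<Longrightarrow> 0 \<le> Y i x" "x \<in> space M \<Longrightarrow> Y i x \<le> X i x"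
  using nonneg[of x i] unfolding Y_def by (auto intro: tr_bounds)

lemma Y_le: "Y i x \<le> real (Suc i)"
  unfolding Y_def by (rule tr_bounds(3))

lemma Y_indep: "indep_vars (\<lambda>_. borel) Y UNIV"
  unfolding Y_def[abs_def] by (rule indep_vars_compose2[OF indep]) simp

lemma Y_integrable: "integrable M (\<lambda>x. f (Y i x))"
  if [measurable]: "f \<in> borel_measurable borel" and "\<And>v. 0 \<le> v \<Longrightarrow> v \<le> real (Suc i) \<Longrightarrow> \<bar>f v\<bar> \<le> B" for f :: "real \<Rightarrow> real" and B :: real
  by (rule integrable_const_bound[where B=B]) (use that Y_bounds Y_le in auto)

lemma tail_sum: "0 \<le> v \<Longrightarrow> (\<Sum>n<N. indicator {x. x > real (Suc n)} v) \<le> (v::real)"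
proof (induction N)
  case 0 thus ?case by simp
next
  case (Suc N)
  have b: "(\<Sum>n<N. indicator {x. x > real (Suc n)} v) \<le> real N"
    using sum_bounded_above[of "{..<N}" "\<lambda>n. indicator {x. x > real (Suc n)} v :: real" 1]
    by (simp add: indicator_def)
  show ?case
  proof (cases "v > real (Suc N)")
    case True thus ?thesis using b by simp
  next
    case False thus ?thesis using Suc by simp
  qed
qed

lemma eventually_XY: "AE x in M. eventually (\<lambda>n. X n x = Y n x) sequentially"
proof -
  define A where "A n = {x \<in> space M. X n x > real (Suc n)}" for n
  have [measurable]: "A n \<in> sets M" for n unfolding A_def by measurable
  have pA: "prob (A n) = prob {x \<in> space M. X 0 x \<in> {v. v > real (Suc n)}}" for n
    unfolding A_def using ident_prob[of "{v. v > real (Suc n)}" n] by simp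
  have "summable (\<lambda>n. measure M (A n))"
  proof (rule summableI_nonneg_bounded)
    fix N
    have "(\<Sum>n<N. measure M (A n)) = (\<Sum>n<N. \<integral>x. indicator {v. v > real (Suc n)} (X 0 x) \<partial>M)"
    proof (intro sum.cong refl)
      fix n
      have "(\<integral>x. indicator {v. v > real (Suc n)} (X 0 x) \<partial>M) = (\<integral>x. indicator {x\<in>space M. X 0 x > real (Suc n)} x \<partial>M)"
        by (intro Bochner_Integration.integral_cong) (auto simp: indicator_def)
      also have "\<dots> = prob {x\<in>space M. X 0 x > real (Suc n)}" by simp
      finally show "measure M (A n) = (\<integral>x. indicator {v. v > real (Suc n)} (X 0 x) \<partial>M)"
        using pA[of n] by simp
    qed
    also have "\<dots> = (\<integral>x. (\<Sum>n<N. indicator {v. v > real (Suc n)} (X 0 x)) \<partial>M)"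
      by (subst Bochner_Integration.integral_sum) (auto intro!: integrable_const_bound[where B=1] simp: indicator_def)
    also have "\<dots> \<le> (\<integral>x. X 0 x \<partial>M)"
      by (intro integral_mono int0 tail_sum nonneg)
         (auto intro!: integrable_const_bound[where B="real N"] simp: indicator_def card_int_le)
    finally show "(\<Sum>n<N. measure M (A n)) \<le> (\<integral>x. X 0 x \<partial>M)" .
  qed simp
  hence "AE x in M. eventually (\<lambda>n. x \<in> space M - A n) sequentially"
    by (intro borel_cantelli_AE1) (auto simp: emeasure_eq_measure)
  thus ?thesis
    by (rule AE_mp) (auto intro!: AE_I2 elim!: eventually_mono simp: A_def Y_def tr_def)
qed

end

lemma (in prob_space) sum_sq_indep:
  fixes V :: "nat \<Rightarrow> 'a \<Rightarrow> real" and B :: "nat \<Rightarrow> real"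
  assumes ind: "indep_vars (\<lambda>_. borel) V UNIV"
    and bnd: "\<And>i x. x \<in> space M \<Longrightarrow> \<bar>V i x\<bar> \<le> B i"
    and mz: "\<And>i. expectation (V i) = 0"
  shows "expectation (\<lambda>x. (\<Sum>i<n. V i x)\<^sup>2) = (\<Sum>i<n. expectation (\<lambda>x. (V i x)\<^sup>2))"
proof (induction n)
  case 0 thus ?case by simp
next
  case (Suc n)
  have meas[measurable]: "V i \<in> borel_measurable M" for i
    using ind unfolding indep_vars_def2 by auto
  define S where "S x = (\<Sum>i<n. V i x)" for x
  have Sm[measurable]: "S \<in> borel_measurable M" unfolding S_def by measurable
  have Sb: "x \<in> space M \<Longrightarrow> \<bar>S x\<bar> \<le> (\<Sum>i<n. B i)" for x
    unfolding S_def by (rule order_trans[OF sum_abs sum_mono]) (rule bnd)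
  have intS: "integrable M S" by (rule integrable_const_bound[where B="\<Sum>i<n. B i"]) (use Sb in auto)
  have intV: "integrable M (V n)" by (rule integrable_const_bound[where B="B n"]) (use bnd in auto)
  have intS2: "integrable M (\<lambda>x. (S x)\<^sup>2)"
    by (rule integrable_const_bound[where B="(\<Sum>i<n. B i)\<^sup>2"])
       (auto intro!: AE_I2 simp: abs_le_square_iff[symmetric] power_abs dest: Sb)
  have intV2: "integrable M (\<lambda>x. (V n x)\<^sup>2)"
  proof (rule integrable_const_bound[where B="(B n)\<^sup>2"])
    have "x \<in> space M \<Longrightarrow> norm ((V n x)\<^sup>2) \<le> (B n)\<^sup>2" for x
    proof -
      assume x: "x \<in> space M"
      have "norm ((V n x)\<^sup>2) = \<bar>V n x\<bar>\<^sup>2" by simp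
      also have "\<dots> \<le> (B n)\<^sup>2" by (rule power_mono[OF bnd[OF x]]) simp
      finally show ?thesis .
    qed
    thus "AE x in M. norm ((V n x)\<^sup>2) \<le> (B n)\<^sup>2" by (intro AE_I2)
  qed simp
  have indep1: "indep_var borel (V n) borel S"
    unfolding S_def[abs_def] by (rule indep_vars_sum) (auto intro: indep_vars_subset[OF ind])
  have intSV: "integrable M (\<lambda>x. V n x * S x)"
    by (rule indep_var_integrable[OF indep1 intV intS])
  have ESV: "expectation (\<lambda>x. V n x * S x) = 0"
    using indep_var_lebesgue_integral[OF indep1 intV intS] mz[of n] by simp
  have "(\<lambda>x. (\<Sum>i<Suc n. V i x)\<^sup>2) = (\<lambda>x. (S x)\<^sup>2 + 2 * (V n x * S x) + (V n x)\<^sup>2)"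
    by (auto simp: S_def power2_eq_square algebra_simps)
  hence "expectation (\<lambda>x. (\<Sum>i<Suc n. V i x)\<^sup>2) = expectation (\<lambda>x. (S x)\<^sup>2) + 2 * expectation (\<lambda>x. V n x * S x) + expectation (\<lambda>x. (V n x)\<^sup>2)"
    using intS2 intSV intV2 by simp
  also have "\<dots> = (\<Sum>i<Suc n. expectation (\<lambda>x. (V i x)\<^sup>2))"
    using Suc ESV by (simp add: S_def)
  finally show ?case .
qed

context slln begin

definition EY :: "nat \<Rightarrow> real" where "EY i = expectation (Y i)"
definition W :: "nat \<Rightarrow> 'a \<Rightarrow> real" where "W i x = Y i x - EY i"

lemma Y_int: "integrable M (Y i)"
  using Y_integrable[where f="\<lambda>v. v" and B="real (Suc i)" and i=i] by simp

lemma W_measurable[measurable]: "W i \<in> borel_measurable M" unfolding W_def by measurable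

lemma W_indep: "indep_vars (\<lambda>_. borel) W UNIV"
  unfolding W_def[abs_def] by (rule indep_vars_compose2[OF Y_indep]) simp

lemma W_bound: "x \<in> space M \<Longrightarrow> \<bar>W i x\<bar> \<le> real (Suc i) + \<bar>EY i\<bar>"
  using Y_bounds(1)[of x i] Y_le[of i x] unfolding W_def by linarith

lemma W_mean: "expectation (W i) = 0"
  using Y_int[of i] unfolding W_def[abs_def] EY_def by (simp add: prob_space)

lemma Y2_eq: "expectation (\<lambda>x. (Y i x)\<^sup>2) = expectation (\<lambda>x. (tr i (X 0 x))\<^sup>2)"
  unfolding Y_def using ident_integral[of "\<lambda>v. (tr i v)\<^sup>2" i] by simp

lemma W2_le: "expectation (\<lambda>x. (W i x)\<^sup>2) \<le> expectation (\<lambda>x. (tr i (X 0 x))\<^sup>2)"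
proof -
  have intY2: "integrable M (\<lambda>x. (Y i x)\<^sup>2)"
    using Y_integrable[where f="\<lambda>v. v\<^sup>2" and B="(real (Suc i))\<^sup>2" and i=i]
    by (simp add: abs_le_square_iff[symmetric] power_abs del: of_nat_Suc)
  have "(\<lambda>x. (W i x)\<^sup>2) = (\<lambda>x. (Y i x)\<^sup>2 - 2 * EY i * Y i x + (EY i)\<^sup>2)"
    by (auto simp: W_def power2_eq_square algebra_simps)
  hence "expectation (\<lambda>x. (W i x)\<^sup>2) = expectation (\<lambda>x. (Y i x)\<^sup>2) - 2 * EY i * EY i + (EY i)\<^sup>2"
    using intY2 Y_int[of i] by (simp add: EY_def prob_space)
  also have "\<dots> \<le> expectation (\<lambda>x. (Y i x)\<^sup>2)" by (simp add: power2_eq_square)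
  finally show ?thesis using Y2_eq by simp
qed

lemma sum_W_sq: "expectation (\<lambda>x. (\<Sum>i<n. W i x)\<^sup>2) \<le> (\<Sum>i<n. expectation (\<lambda>x. (tr i (X 0 x))\<^sup>2))"
  using sum_sq_indep[OF W_indep W_bound W_mean, of n] by (simp add: sum_mono W2_le)

end

lemma (in prob_space) bounded_sq_integrable:
  fixes f :: "'a \<Rightarrow> real"
  assumes [measurable]: "f \<in> borel_measurable M" and b: "\<And>x. x \<in> space M \<Longrightarrow> \<bar>f x\<bar> \<le> B"
  shows "integrable M (\<lambda>x. (f x)\<^sup>2)"
proof (rule integrable_const_bound[where B="B\<^sup>2"])
  have "x \<in> space M \<Longrightarrow> norm ((f x)\<^sup>2) \<le> B\<^sup>2" for x
  proof -
    assume x: "x \<in> space M"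
    have "norm ((f x)\<^sup>2) = \<bar>f x\<bar>\<^sup>2" by simp
    also have "\<dots> \<le> B\<^sup>2" by (rule power_mono[OF b[OF x]]) simp
    finally show ?thesis .
  qed
  thus "AE x in M. norm ((f x)\<^sup>2) \<le> B\<^sup>2" by (intro AE_I2)
qed simp

context slln begin

lemma G_bound:
  assumes a: "\<alpha> > 1" and v: "v \<ge> 0"
  shows "(\<Sum>i<kseq \<alpha> m. (tr i v)\<^sup>2) / (real (kseq \<alpha> m))\<^sup>2
      \<le> (if v \<le> real (kseq \<alpha> m) then v\<^sup>2 * (1 / real (kseq \<alpha> m)) else 0)"
proof (cases "v \<le> real (kseq \<alpha> m)")
  case True
  have kp: "real (kseq \<alpha> m) > 0" using kseq_bounds(4)[OF a, of m] by simp
  have "(\<Sum>i<kseq \<alpha> m. (tr i v)\<^sup>2) \<le> (\<Sum>i<kseq \<alpha> m. v\<^sup>2)"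
    by (intro sum_mono power_mono tr_bounds v)
  also have "\<dots> = real (kseq \<alpha> m) * v\<^sup>2" by simp
  finally have "(\<Sum>i<kseq \<alpha> m. (tr i v)\<^sup>2) / (real (kseq \<alpha> m))\<^sup>2 \<le> real (kseq \<alpha> m) * v\<^sup>2 / (real (kseq \<alpha> m))\<^sup>2"
    using kp by (intro divide_right_mono) auto
  also have "\<dots> = v\<^sup>2 * (1 / real (kseq \<alpha> m))" using kp by (simp add: power2_eq_square field_simps)
  finally show ?thesis using True by simp
next
  case False
  have "tr i v = 0" if "i < kseq \<alpha> m" for i
  proof -
    have "real (Suc i) \<le> real (kseq \<alpha> m)" using that by linarith
    thus ?thesis using False by (simp add: tr_def)
  qed
  thus ?thesis using False by simp
qed

lemma G_sum:
  assumes a: "\<alpha> > 1" and v: "v \<ge> 0"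
  shows "(\<Sum>m. ennreal ((\<Sum>i<kseq \<alpha> m. (tr i v)\<^sup>2) / (real (kseq \<alpha> m))\<^sup>2)) \<le> ennreal (2 * \<alpha> / (\<alpha> - 1) * v)"
proof (cases "v = 0")
  case True thus ?thesis by (simp add: tr_def)
next
  case False
  hence vp: "v > 0" using v by simp
  define f where "f m = (if v \<le> real (kseq \<alpha> m) then 1 / real (kseq \<alpha> m) else 0)" for m
  have fs: "summable f" unfolding f_def by (rule geom(1)[OF a vp])
  have fnn: "f m \<ge> 0" for m unfolding f_def by simp
  have "(\<Sum>m. ennreal ((\<Sum>i<kseq \<alpha> m. (tr i v)\<^sup>2) / (real (kseq \<alpha> m))\<^sup>2)) \<le> (\<Sum>m. ennreal (v\<^sup>2 * f m))"
  proof (intro suminf_le summableI ennreal_leI)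
    fix m show "(\<Sum>i<kseq \<alpha> m. (tr i v)\<^sup>2) / (real (kseq \<alpha> m))\<^sup>2 \<le> v\<^sup>2 * f m"
      using G_bound[OF a v, of m] unfolding f_def by (auto split: if_splits)
  qed
  also have "\<dots> = ennreal (\<Sum>m. v\<^sup>2 * f m)"
    using fnn fs by (intro suminf_ennreal2 mult_nonneg_nonneg summable_mult) auto
  also have "(\<Sum>m. v\<^sup>2 * f m) = v\<^sup>2 * (\<Sum>m. f m)" by (rule suminf_mult[OF fs])
  also have "\<dots> \<le> v\<^sup>2 * (2 * \<alpha> / ((\<alpha> - 1) * v))"
    by (intro mult_left_mono) (use geom(2)[OF a vp] in \<open>auto simp: f_def\<close>)
  also have "\<dots> = 2 * \<alpha> / (\<alpha> - 1) * v" using vp a by (simp add: power2_eq_square field_simps)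
  finally show ?thesis by (simp add: ennreal_leI)
qed

lemma trX_sq_int: "integrable M (\<lambda>x. (tr i (X 0 x))\<^sup>2)"
proof (rule bounded_sq_integrable[where B="real (Suc i)"])
  fix x assume x: "x \<in> space M"
  have "0 \<le> tr i (X 0 x)" by (rule tr_bounds(1)[OF nonneg[OF x]])
  moreover have "tr i (X 0 x) \<le> real (Suc i)" by (rule tr_bounds(3))
  ultimately show "\<bar>tr i (X 0 x)\<bar> \<le> real (Suc i)" by (simp only: abs_of_nonneg)
qed simp

lemma Z_to_0:
  assumes a: "\<alpha> > 1"
  shows "AE x in M. (\<lambda>m. (\<Sum>i<kseq \<alpha> m. W i x) / real (kseq \<alpha> m)) \<longlonglongrightarrow> 0"
proof -
  define k where "k = kseq \<alpha>"
  define Z where "Z m x = (\<Sum>i<k m. W i x) / real (k m)" for m x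
  define G where "G m v = (\<Sum>i<k m. (tr i v)\<^sup>2) / (real (k m))\<^sup>2" for m v
  have kp: "real (k m) > 0" for m using kseq_bounds(4)[OF a, of m] by (simp add: k_def)
  have Zm[measurable]: "Z m \<in> borel_measurable M" for m unfolding Z_def by measurable
  have Gm[measurable]: "(\<lambda>x. G m (X 0 x)) \<in> borel_measurable M" for m unfolding G_def by measurable
  have intZ2: "integrable M (\<lambda>x. (Z m x)\<^sup>2)" for m
  proof (rule bounded_sq_integrable[where B="(\<Sum>i<k m. real (Suc i) + \<bar>EY i\<bar>) / real (k m)"])
    fix x assume x: "x \<in> space M"
    have "\<bar>\<Sum>i<k m. W i x\<bar> \<le> (\<Sum>i<k m. real (Suc i) + \<bar>EY i\<bar>)"
      by (rule order_trans[OF sum_abs sum_mono]) (rule W_bound[OF x])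
    thus "\<bar>Z m x\<bar> \<le> (\<Sum>i<k m. real (Suc i) + \<bar>EY i\<bar>) / real (k m)"
      unfolding Z_def abs_divide abs_of_nat by (rule divide_right_mono) simp
  qed simp
  have intG: "integrable M (\<lambda>x. G m (X 0 x))" for m
    unfolding G_def by (intro integrable_divide_zero Bochner_Integration.integrable_sum trX_sq_int)
  have EG: "expectation (\<lambda>x. G m (X 0 x)) = (\<Sum>i<k m. expectation (\<lambda>x. (tr i (X 0 x))\<^sup>2)) / (real (k m))\<^sup>2" for m
    unfolding G_def by (subst integral_divide_zero, subst Bochner_Integration.integral_sum) (auto intro: trX_sq_int)
  have EZ2: "expectation (\<lambda>x. (Z m x)\<^sup>2) \<le> expectation (\<lambda>x. G m (X 0 x))" for m
  proof -
    have "(\<lambda>x. (Z m x)\<^sup>2) = (\<lambda>x. (\<Sum>i<k m. W i x)\<^sup>2 / (real (k m))\<^sup>2)"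
      by (simp add: Z_def power_divide)
    hence "expectation (\<lambda>x. (Z m x)\<^sup>2) = expectation (\<lambda>x. (\<Sum>i<k m. W i x)\<^sup>2) / (real (k m))\<^sup>2"
      by simp
    also have "\<dots> \<le> (\<Sum>i<k m. expectation (\<lambda>x. (tr i (X 0 x))\<^sup>2)) / (real (k m))\<^sup>2"
      by (intro divide_right_mono sum_W_sq) simp
    finally show ?thesis by (simp add: EG)
  qed
  have Gnn: "G m v \<ge> 0" for m v unfolding G_def by (intro divide_nonneg_nonneg sum_nonneg) auto
  have "(\<integral>\<^sup>+x. (\<Sum>m. ennreal ((Z m x)\<^sup>2)) \<partial>M) = (\<Sum>m. \<integral>\<^sup>+x. ennreal ((Z m x)\<^sup>2) \<partial>M)"
    by (rule nn_integral_suminf) measurable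
  also have "\<dots> = (\<Sum>m. ennreal (expectation (\<lambda>x. (Z m x)\<^sup>2)))"
    by (intro suminf_cong nn_integral_eq_integral intZ2) auto
  also have "\<dots> \<le> (\<Sum>m. ennreal (expectation (\<lambda>x. G m (X 0 x))))"
    by (intro suminf_le summableI ennreal_leI EZ2)
  also have "\<dots> = (\<Sum>m. \<integral>\<^sup>+x. ennreal (G m (X 0 x)) \<partial>M)"
    by (intro suminf_cong nn_integral_eq_integral[symmetric] intG) (auto intro: Gnn)
  also have "\<dots> = \<integral>\<^sup>+x. (\<Sum>m. ennreal (G m (X 0 x))) \<partial>M"
    by (rule nn_integral_suminf[symmetric]) measurable
  also have "\<dots> \<le> \<integral>\<^sup>+x. ennreal (2 * \<alpha> / (\<alpha> - 1) * X 0 x) \<partial>M"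
    by (intro nn_integral_mono) (unfold G_def k_def, rule G_sum[OF a nonneg])
  also have "\<dots> = ennreal (expectation (\<lambda>x. 2 * \<alpha> / (\<alpha> - 1) * X 0 x))"
    using a nonneg by (intro nn_integral_eq_integral) (auto intro!: int0)
  also have "\<dots> < \<infinity>" by simp
  finally have fin: "(\<integral>\<^sup>+x. (\<Sum>m. ennreal ((Z m x)\<^sup>2)) \<partial>M) \<noteq> \<infinity>" by simp
  have "AE x in M. (\<Sum>m. ennreal ((Z m x)\<^sup>2)) \<noteq> \<infinity>"
    by (rule nn_integral_PInf_AE[OF _ fin]) measurable
  thus ?thesis
  proof (rule AE_mp[OF _ AE_I2], intro impI)
    fix x assume "(\<Sum>m. ennreal ((Z m x)\<^sup>2)) \<noteq> \<infinity>"
    hence "summable (\<lambda>m. (Z m x)\<^sup>2)" by (intro summable_suminf_not_top) auto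
    hence "(\<lambda>m. (Z m x)\<^sup>2) \<longlonglongrightarrow> 0" by (rule summable_LIMSEQ_zero)
    hence "(\<lambda>m. sqrt ((Z m x)\<^sup>2)) \<longlonglongrightarrow> sqrt 0" by (rule tendsto_real_sqrt)
    hence "(\<lambda>m. \<bar>Z m x\<bar>) \<longlonglongrightarrow> 0" by simp
    hence "(\<lambda>m. Z m x) \<longlonglongrightarrow> 0" by (simp only: tendsto_rabs_zero_iff)
    thus "(\<lambda>m. (\<Sum>i<kseq \<alpha> m. W i x) / real (kseq \<alpha> m)) \<longlonglongrightarrow> 0"
      by (simp add: Z_def k_def)
  qed
qed

end

context slln begin

lemma EY_lim: "EY \<longlonglongrightarrow> expectation (X 0)"
proof -
  have e: "EY i = expectation (\<lambda>x. tr i (X 0 x))" for i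
    unfolding EY_def Y_def[abs_def] using ident_integral[of "tr i" i] by simp
  have "(\<lambda>i. expectation (\<lambda>x. tr i (X 0 x))) \<longlonglongrightarrow> expectation (X 0)"
  proof (rule integral_dominated_convergence[where w="X 0"])
    show "AE x in M. (\<lambda>i. tr i (X 0 x)) \<longlonglongrightarrow> X 0 x"
    proof (intro AE_I2 tendsto_eventually)
      fix x
      show "eventually (\<lambda>i. tr i (X 0 x) = X 0 x) sequentially"
        unfolding eventually_sequentially
      proof (intro exI allI impI)
        fix i assume "i \<ge> nat \<lceil>X 0 x\<rceil>"
        hence "X 0 x \<le> real (Suc i)" by linarith
        thus "tr i (X 0 x) = X 0 x" by (simp add: tr_def)
      qed
    qed
    show "AE x in M. norm (tr i (X 0 x)) \<le> X 0 x" for i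
      by (intro AE_I2) (use nonneg tr_bounds in \<open>auto\<close>)
  qed (auto intro: int0)
  thus ?thesis unfolding e[abs_def] .
qed

lemma T_conv:
  assumes a: "\<alpha> > 1"
  shows "AE x in M. (\<lambda>m. (\<Sum>i<kseq \<alpha> m. Y i x) / real (kseq \<alpha> m)) \<longlonglongrightarrow> expectation (X 0)"
proof -
  have c: "(\<lambda>m. (\<Sum>i<kseq \<alpha> m. EY i) / real (kseq \<alpha> m)) \<longlonglongrightarrow> expectation (X 0)"
    using filterlim_compose[OF cesaro[OF EY_lim] kseq_at_top[OF a]] by (simp add: o_def)
  show ?thesis using Z_to_0[OF a]
  proof (rule AE_mp[OF _ AE_I2], intro impI)
    fix x assume z: "(\<lambda>m. (\<Sum>i<kseq \<alpha> m. W i x) / real (kseq \<alpha> m)) \<longlonglongrightarrow> 0"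
    have "(\<lambda>m. (\<Sum>i<kseq \<alpha> m. W i x) / real (kseq \<alpha> m) + (\<Sum>i<kseq \<alpha> m. EY i) / real (kseq \<alpha> m))
        \<longlonglongrightarrow> 0 + expectation (X 0)" by (rule tendsto_add[OF z c])
    moreover have "(\<Sum>i<kseq \<alpha> m. W i x) / real (kseq \<alpha> m) + (\<Sum>i<kseq \<alpha> m. EY i) / real (kseq \<alpha> m)
        = (\<Sum>i<kseq \<alpha> m. Y i x) / real (kseq \<alpha> m)" for m
      by (simp add: W_def sum_subtractf add_divide_distrib[symmetric])
    ultimately show "(\<lambda>m. (\<Sum>i<kseq \<alpha> m. Y i x) / real (kseq \<alpha> m)) \<longlonglongrightarrow> expectation (X 0)" by simp
  qed
qed

theorem SLLN: "AE x in M. (\<lambda>n. (\<Sum>i<n. X i x) / real n) \<longlonglongrightarrow> expectation (X 0)"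
proof -
  define \<alpha> where "\<alpha> j = 1 + 1 / real (Suc j)" for j
  have a1: "\<alpha> j > 1" for j by (simp add: \<alpha>_def)
  have alim: "\<alpha> \<longlonglongrightarrow> 1"
    unfolding \<alpha>_def[abs_def] using tendsto_add[OF tendsto_const LIMSEQ_inverse_real_of_nat, of 1] by (simp add: inverse_eq_divide)
  have "AE x in M. \<forall>j. (\<lambda>m. (\<Sum>i<kseq (\<alpha> j) m. Y i x) / real (kseq (\<alpha> j) m)) \<longlonglongrightarrow> expectation (X 0)"
    by (subst AE_all_countable) (auto intro: T_conv a1)
  with eventually_XY AE_space show ?thesis
  proof (eventually_elim)
    case (elim x)
    define T where "T n = (\<Sum>i<n. Y i x)" for n
    have Tnn: "T n \<ge> 0" for n unfolding T_def using Y_bounds(1)[OF elim(2)] by (simp add: sum_nonneg)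
    have Tmono: "mono T" unfolding mono_def T_def
      by (auto intro!: sum_mono2 Y_bounds(1)[OF elim(2)])
    have Tc: "(\<lambda>n. T n / real n) \<longlonglongrightarrow> expectation (X 0)"
      by (rule interp[OF Tmono Tnn a1 alim]) (use elim(3) in \<open>simp add: T_def\<close>)
    obtain N where N: "\<And>n. n \<ge> N \<Longrightarrow> X n x = Y n x" using elim(1) by (auto simp: eventually_sequentially)
    define c where "c = (\<Sum>i<N. X i x - Y i x)"
    have "(\<lambda>n. T n / real n + c / real n) \<longlonglongrightarrow> expectation (X 0) + 0"
      by (intro tendsto_add Tc lim_const_over_n)
    moreover have "eventually (\<lambda>n. T n / real n + c / real n = (\<Sum>i<n. X i x) / real n) sequentially"
      unfolding eventually_sequentially
    proof (intro exI allI impI)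
      fix n assume n: "n \<ge> N"
      have "(\<Sum>i<n. X i x - Y i x) = c"
        unfolding c_def using n N by (intro sum.mono_neutral_right) auto
      hence "(\<Sum>i<n. X i x) = T n + c" by (simp add: T_def sum_subtractf)
      thus "T n / real n + c / real n = (\<Sum>i<n. X i x) / real n" by (simp add: add_divide_distrib)
    qed
    ultimately show ?case by (auto intro: Lim_transform_eventually)
  qed
qed

end

lemma inv_sqrt_lim: "(\<lambda>n. 1 / sqrt (real n)) \<longlonglongrightarrow> 0"
proof -
  have "(\<lambda>n. sqrt (1 / real n)) \<longlonglongrightarrow> sqrt 0" by (intro tendsto_real_sqrt lim_inverse_n')
  thus ?thesis by (simp add: real_sqrt_divide)
qed

lemma det_conv:
  fixes f :: "int \<Rightarrow> real" and y :: "nat \<Rightarrow> real"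
  assumes fb: "\<And>\<delta>. \<delta> > 0 \<Longrightarrow> \<exists>C. \<forall>k. \<bar>f k - c * real_of_int k\<bar> \<le> \<delta> * \<bar>real_of_int k\<bar> + C"
    and y: "y \<longlonglongrightarrow> L" and \<sigma>: "\<sigma> > 0"
  shows "(\<lambda>n. f \<lfloor>y n * sqrt (real n * \<sigma>\<^sup>2)\<rfloor> / sqrt (real n)) \<longlonglongrightarrow> c * (\<sigma> * L)"
proof -
  define K where "K n = \<lfloor>y n * sqrt (real n * \<sigma>\<^sup>2)\<rfloor>" for n
  define q where "q n = real_of_int (K n) / sqrt (real n)" for n
  have sq: "sqrt (real n * \<sigma>\<^sup>2) = sqrt (real n) * \<sigma>" for n using \<sigma> by (simp add: real_sqrt_mult)
  have e: "(\<lambda>n. q n - y n * \<sigma>) \<longlonglongrightarrow> 0"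
  proof (rule Lim_null_comparison[OF _ inv_sqrt_lim])
    show "eventually (\<lambda>n. norm (q n - y n * \<sigma>) \<le> 1 / sqrt (real n)) sequentially"
      unfolding eventually_sequentially
    proof (intro exI allI impI)
      fix n :: nat assume n: "n \<ge> 1"
      hence sp: "sqrt (real n) > 0" by simp
      have "q n - y n * \<sigma> = (real_of_int (K n) - y n * sqrt (real n * \<sigma>\<^sup>2)) / sqrt (real n)"
        using sp by (simp add: q_def sq field_simps)
      moreover have "\<bar>real_of_int (K n) - y n * sqrt (real n * \<sigma>\<^sup>2)\<bar> \<le> 1"
        unfolding K_def by linarith
      ultimately show "norm (q n - y n * \<sigma>) \<le> 1 / sqrt (real n)"
        using sp by (simp add: abs_divide divide_right_mono)
    qed
  qed
  have q: "q \<longlonglongrightarrow> \<sigma> * L"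
  proof -
    have "(\<lambda>n. (q n - y n * \<sigma>) + y n * \<sigma>) \<longlonglongrightarrow> 0 + L * \<sigma>" by (intro tendsto_intros e y)
    thus ?thesis by (simp add: mult.commute)
  qed
  define B where "B = \<sigma> * \<bar>L\<bar> + 1"
  have Bp: "B > 0" using \<sigma> by (simp add: B_def add_nonneg_pos)
  have r: "(\<lambda>n. (f (K n) - c * real_of_int (K n)) / sqrt (real n)) \<longlonglongrightarrow> 0"
  proof (rule LIMSEQ_I)
    fix \<epsilon> :: real assume \<epsilon>: "\<epsilon> > 0"
    define \<delta> where "\<delta> = \<epsilon> / (2 * B)"
    have dp: "\<delta> > 0" using \<epsilon> Bp by (simp add: \<delta>_def)
    obtain C where C: "\<And>k. \<bar>f k - c * real_of_int k\<bar> \<le> \<delta> * \<bar>real_of_int k\<bar> + C" using fb[OF dp] by blast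
    have "(\<lambda>n. \<bar>q n\<bar>) \<longlonglongrightarrow> \<bar>\<sigma> * L\<bar>" by (intro tendsto_rabs q)
    hence ev1: "eventually (\<lambda>n. \<bar>q n\<bar> < B) sequentially"
      using \<sigma> by (intro order_tendstoD) (auto simp: B_def abs_mult)
    have "(\<lambda>n. C * (1 / sqrt (real n))) \<longlonglongrightarrow> C * 0" by (intro tendsto_intros inv_sqrt_lim)
    hence ev2: "eventually (\<lambda>n. C * (1 / sqrt (real n)) < \<epsilon> / 2) sequentially"
      using \<epsilon> by (intro order_tendstoD) auto
    have "eventually (\<lambda>n. norm ((f (K n) - c * real_of_int (K n)) / sqrt (real n) - 0) < \<epsilon>) sequentially"
      using ev1 ev2 eventually_gt_at_top[of 0]
    proof eventually_elim
      case (elim n)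
      hence sp: "sqrt (real n) > 0" by simp
      have "norm ((f (K n) - c * real_of_int (K n)) / sqrt (real n) - 0) = \<bar>f (K n) - c * real_of_int (K n)\<bar> / sqrt (real n)"
        using sp by (simp add: abs_divide)
      also have "\<dots> \<le> (\<delta> * \<bar>real_of_int (K n)\<bar> + C) / sqrt (real n)"
        using sp C by (intro divide_right_mono) auto
      also have "\<dots> = \<delta> * \<bar>q n\<bar> + C * (1 / sqrt (real n))"
        using sp by (simp add: q_def abs_divide field_simps)
      also have "\<dots> < \<delta> * B + \<epsilon> / 2"
        using elim dp by (intro add_le_less_mono mult_left_mono) auto
      also have "\<delta> * B = \<epsilon> / 2" using Bp by (simp add: \<delta>_def)
      finally show ?case by simp
    qed
    thus "\<exists>no. \<forall>n\<ge>no. norm ((f (K n) - c * real_of_int (K n)) / sqrt (real n) - 0) < \<epsilon>"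
      by (simp only: eventually_sequentially)
  qed
  have "(\<lambda>n. c * q n + (f (K n) - c * real_of_int (K n)) / sqrt (real n)) \<longlonglongrightarrow> c * (\<sigma> * L) + 0"
    by (intro tendsto_intros q r)
  moreover have "c * q n + (f (K n) - c * real_of_int (K n)) / sqrt (real n) = f (K n) / sqrt (real n)" for n
    by (simp add: q_def diff_divide_distrib)
  ultimately show ?thesis by (simp add: K_def)
qed


lemma quenched_weak_conv:
  fixes N :: "'b measure" and S :: "nat \<Rightarrow> 'b \<Rightarrow> int" and f :: "int \<Rightarrow> real"
  assumes Q: "prob_space N" and Sm: "\<And>n. S n \<in> measurable N (count_space UNIV)"
    and clt: "weak_conv_m (\<lambda>n. distr N borel (\<lambda>y. real_of_int (S n y) / sqrt (real n * \<sigma>\<^sup>2))) std_normal_distribution"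
    and \<sigma>: "\<sigma> > 0" and c: "c > 0"
    and fb: "\<And>\<delta>. \<delta> > 0 \<Longrightarrow> \<exists>C. \<forall>k. \<bar>f k - c * real_of_int k\<bar> \<le> \<delta> * \<bar>real_of_int k\<bar> + C"
  shows "weak_conv_m (\<lambda>n. distr N borel (\<lambda>y. f (S n y) / sqrt (real n))) (density lborel (normal_density 0 (c * \<sigma>)))"
proof -
  interpret Q: prob_space N by (rule Q)
  have Sm'[measurable]: "S n \<in> measurable N (count_space UNIV)" for n by (rule Sm)
  define \<mu>n where "\<mu>n n = distr N borel (\<lambda>y. real_of_int (S n y) / sqrt (real n * \<sigma>\<^sup>2))" for n
  have \<mu>r: "real_distribution (\<mu>n n)" for n unfolding \<mu>n_def by (intro Q.real_distribution_distr) measurable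
  have "\<exists>(\<Omega> :: real measure) (Y_seq :: nat \<Rightarrow> real \<Rightarrow> real) (Y :: real \<Rightarrow> real).
    prob_space \<Omega> \<and> (\<forall>n. Y_seq n \<in> measurable \<Omega> borel) \<and> (\<forall>n. distr \<Omega> borel (Y_seq n) = \<mu>n n) \<and>
    Y \<in> measurable \<Omega> lborel \<and> distr \<Omega> borel Y = std_normal_distribution \<and>
    (\<forall>x \<in> space \<Omega>. (\<lambda>n. Y_seq n x) \<longlonglongrightarrow> Y x)"
    by (rule Skorohod[OF \<mu>r real_dist_normal_dist]) (use clt in \<open>simp add: \<mu>n_def\<close>)
  then obtain \<Omega> :: "real measure" and Yn Y where
    \<Omega>: "prob_space \<Omega>" and Ynm[measurable]: "\<And>n. Yn n \<in> measurable \<Omega> borel"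
    and dYn: "\<And>n. distr \<Omega> borel (Yn n) = \<mu>n n" and Ym: "Y \<in> measurable \<Omega> lborel"
    and dY: "distr \<Omega> borel Y = std_normal_distribution"
    and conv: "\<And>x. x \<in> space \<Omega> \<Longrightarrow> (\<lambda>n. Yn n x) \<longlonglongrightarrow> Y x" by blast
  interpret \<Omega>: prob_space \<Omega> by (rule \<Omega>)
  have Ym'[measurable]: "Y \<in> borel_measurable \<Omega>" using Ym by simp
  have cs: "c * \<sigma> > 0" using c \<sigma> by simp
  have target: "real_distribution (density lborel (normal_density 0 (c * \<sigma>)))"
    unfolding real_distribution_def real_distribution_axioms_def using prob_space_normal_density[OF cs] by simp
  show ?thesis
  proof (rule integral_bdd_continuous_conv_imp_weak_conv)
    show "real_distribution (distr N borel (\<lambda>y. f (S n y) / sqrt (real n)))" for n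
      by (intro Q.real_distribution_distr) measurable
    show "real_distribution (density lborel (normal_density 0 (c * \<sigma>)))" by (rule target)
    fix g :: "real \<Rightarrow> real" assume gc: "\<And>x. isCont g x" and gb: "\<And>x. \<bar>g x\<bar> \<le> 1"
    have gm[measurable]: "g \<in> borel_measurable borel"
      by (intro borel_measurable_continuous_onI continuous_at_imp_continuous_on) (auto intro: gc)
    define h where "h n u = g (f \<lfloor>u * sqrt (real n * \<sigma>\<^sup>2)\<rfloor> / sqrt (real n))" for n u
    have hm[measurable]: "h n \<in> borel_measurable borel" for n
    proof -
      have "(\<lambda>u. f \<lfloor>u * sqrt (real n * \<sigma>\<^sup>2)\<rfloor> / sqrt (real n)) \<in> borel_measurable borel"
        by (rule measurable_compose_countable[where f="\<lambda>i u. f i / sqrt (real n)"]) measurable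
      thus ?thesis unfolding h_def by measurable
    qed
    have eq1: "integral\<^sup>L (distr N borel (\<lambda>y. f (S n y) / sqrt (real n))) g = (\<integral>\<omega>. h n (Yn n \<omega>) \<partial>\<Omega>)" for n
    proof -
      have "integral\<^sup>L (distr N borel (\<lambda>y. f (S n y) / sqrt (real n))) g = (\<integral>y. g (f (S n y) / sqrt (real n)) \<partial>N)"
        by (rule integral_distr) measurable
      also have "\<dots> = (\<integral>y. h n (real_of_int (S n y) / sqrt (real n * \<sigma>\<^sup>2)) \<partial>N)"
      proof (intro Bochner_Integration.integral_cong refl)
        fix y
        show "g (f (S n y) / sqrt (real n)) = h n (real_of_int (S n y) / sqrt (real n * \<sigma>\<^sup>2))"
        proof (cases "n = 0")
          case True thus ?thesis by (simp add: h_def)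
        next
          case False
          hence "sqrt (real n * \<sigma>\<^sup>2) > 0" using \<sigma> by simp
          thus ?thesis using \<sigma> by (simp add: h_def)
        qed
      qed
      also have "\<dots> = integral\<^sup>L (\<mu>n n) (h n)"
        unfolding \<mu>n_def by (rule integral_distr[symmetric]) measurable
      also have "\<dots> = (\<integral>\<omega>. h n (Yn n \<omega>) \<partial>\<Omega>)"
        unfolding dYn[symmetric] by (rule integral_distr) measurable
      finally show ?thesis .
    qed
    have lim: "(\<lambda>n. \<integral>\<omega>. h n (Yn n \<omega>) \<partial>\<Omega>) \<longlonglongrightarrow> (\<integral>\<omega>. g (c * \<sigma> * Y \<omega>) \<partial>\<Omega>)"
    proof (rule integral_dominated_convergence[where w="\<lambda>_. 1"])
      show "AE \<omega> in \<Omega>. (\<lambda>n. h n (Yn n \<omega>)) \<longlonglongrightarrow> g (c * \<sigma> * Y \<omega>)"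
      proof (rule AE_I2)
        fix \<omega> assume "\<omega> \<in> space \<Omega>"
        hence "(\<lambda>n. f \<lfloor>Yn n \<omega> * sqrt (real n * \<sigma>\<^sup>2)\<rfloor> / sqrt (real n)) \<longlonglongrightarrow> c * (\<sigma> * Y \<omega>)"
          by (intro det_conv fb conv \<sigma>) auto
        thus "(\<lambda>n. h n (Yn n \<omega>)) \<longlonglongrightarrow> g (c * \<sigma> * Y \<omega>)"
          unfolding h_def by (intro isCont_tendsto_compose[OF gc]) (simp add: mult.assoc)
      qed
      show "AE \<omega> in \<Omega>. norm (h n (Yn n \<omega>)) \<le> 1" for n using gb by (simp add: h_def)
    qed measurable
    have dist: "distributed \<Omega> lborel Y (\<lambda>x. ennreal (normal_density 0 1 x))"
    proof -
      have "distr \<Omega> lborel Y = distr \<Omega> borel Y" by (rule distr_cong) auto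
      thus ?thesis unfolding distributed_def using dY Ym by simp
    qed
    have dist2: "distributed \<Omega> lborel (\<lambda>x. 0 + (c * \<sigma>) * Y x) (\<lambda>x. ennreal (normal_density (0 + (c * \<sigma>) * 0) (\<bar>c * \<sigma>\<bar> * 1) x))"
      by (rule \<Omega>.normal_density_affine[OF dist]) (use cs in auto)
    hence dist3: "distr \<Omega> lborel (\<lambda>x. c * \<sigma> * Y x) = density lborel (normal_density 0 (c * \<sigma>))"
      using cs by (simp add: distributed_distr_eq_density)
    have "(\<integral>\<omega>. g (c * \<sigma> * Y \<omega>) \<partial>\<Omega>) = integral\<^sup>L (distr \<Omega> lborel (\<lambda>x. c * \<sigma> * Y x)) g"
      by (rule integral_distr[symmetric]) measurable
    also have "\<dots> = integral\<^sup>L (density lborel (normal_density 0 (c * \<sigma>))) g" by (simp only: dist3)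
    finally show "(\<lambda>n. integral\<^sup>L (distr N borel (\<lambda>y. f (S n y) / sqrt (real n))) g) \<longlonglongrightarrow>
        integral\<^sup>L (density lborel (normal_density 0 (c * \<sigma>))) g"
      using lim unfolding eq1 by simp
  qed
qed


lemma (in prob_space) indep_sets_reindex:
  assumes ind: "indep_sets F I" and inj: "inj_on g J" and sub: "g ` J \<subseteq> I"
  shows "indep_sets (\<lambda>j. F (g j)) J"
  unfolding indep_sets_def
proof (intro conjI ballI allI impI)
  fix j assume "j \<in> J" thus "F (g j) \<subseteq> events" using ind sub unfolding indep_sets_def by auto
next
  fix K A assume K: "K \<subseteq> J" "K \<noteq> {}" "finite K" and A: "A \<in> Pi K (\<lambda>j. F (g j))"
  have injK: "inj_on g K" using inj K(1) by (rule inj_on_subset)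
  define B where "B i = A (the_inv_into K g i)" for i
  have Bg: "k \<in> K \<Longrightarrow> B (g k) = A k" for k unfolding B_def using injK by (simp add: the_inv_into_f_f)
  have "B \<in> Pi (g ` K) F" using A Bg by auto
  moreover have "g ` K \<subseteq> I" "g ` K \<noteq> {}" "finite (g ` K)" using K sub by auto
  ultimately have "prob (\<Inter>i\<in>g ` K. B i) = (\<Prod>i\<in>g ` K. prob (B i))"
    using ind unfolding indep_sets_def by blast
  moreover have "(\<Inter>i\<in>g ` K. B i) = (\<Inter>k\<in>K. A k)" using Bg by auto
  moreover have "(\<Prod>i\<in>g ` K. prob (B i)) = (\<Prod>k\<in>K. prob (A k))"
    using injK Bg by (simp add: prod.reindex)
  ultimately show "prob (\<Inter>j\<in>K. A j) = (\<Prod>j\<in>K. prob (A j))" by simp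
qed

lemma (in prob_space) indep_vars_reindex:
  assumes ind: "indep_vars M' X I" and inj: "inj_on g J" and sub: "g ` J \<subseteq> I"
  shows "indep_vars (\<lambda>j. M' (g j)) (\<lambda>j. X (g j)) J"
  using ind sub unfolding indep_vars_def2
  by (auto intro: indep_sets_reindex[OF _ inj sub, where F="\<lambda>i. {X i -` A \<inter> space M |A. A \<in> sets (M' i)}"])

lemma (in prob_space) sum_sq_indep2:
  fixes V :: "nat \<Rightarrow> 'a \<Rightarrow> real"
  assumes ind: "indep_vars (\<lambda>_. borel) V UNIV"
    and sq: "\<And>i. integrable M (\<lambda>x. (V i x)\<^sup>2)"
    and mz: "\<And>i. expectation (V i) = 0"
  shows "integrable M (\<lambda>x. (\<Sum>i<n. V i x)\<^sup>2) \<and> expectation (\<lambda>x. (\<Sum>i<n. V i x)\<^sup>2) = (\<Sum>i<n. expectation (\<lambda>x. (V i x)\<^sup>2))"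
proof (induction n)
  case 0 thus ?case by simp
next
  case (Suc n)
  have meas[measurable]: "V i \<in> borel_measurable M" for i
    using ind unfolding indep_vars_def2 by auto
  have intV: "integrable M (V i)" for i by (rule square_integrable_imp_integrable[OF meas sq])
  define S where "S x = (\<Sum>i<n. V i x)" for x
  have intS: "integrable M S" unfolding S_def using intV by auto
  have intS2: "integrable M (\<lambda>x. (S x)\<^sup>2)" using Suc by (simp add: S_def)
  have indep1: "indep_var borel (V n) borel S"
    unfolding S_def[abs_def] by (rule indep_vars_sum) (auto intro: indep_vars_subset[OF ind])
  have intSV: "integrable M (\<lambda>x. V n x * S x)"
    by (rule indep_var_integrable[OF indep1 intV intS])
  have ESV: "expectation (\<lambda>x. V n x * S x) = 0"
    using indep_var_lebesgue_integral[OF indep1 intV intS] mz[of n] by simp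
  have e: "(\<lambda>x. (\<Sum>i<Suc n. V i x)\<^sup>2) = (\<lambda>x. (S x)\<^sup>2 + 2 * (V n x * S x) + (V n x)\<^sup>2)"
    by (auto simp: S_def power2_eq_square algebra_simps)
  have "integrable M (\<lambda>x. (S x)\<^sup>2 + 2 * (V n x * S x) + (V n x)\<^sup>2)"
    using intS2 intSV sq[of n] by auto
  moreover have "expectation (\<lambda>x. (S x)\<^sup>2 + 2 * (V n x * S x) + (V n x)\<^sup>2) = expectation (\<lambda>x. (S x)\<^sup>2) + 2 * expectation (\<lambda>x. V n x * S x) + expectation (\<lambda>x. (V n x)\<^sup>2)"
    using intS2 intSV sq[of n] by simp
  ultimately show ?case using Suc ESV unfolding e by (simp add: S_def)
qed

lemma det_bound:
  fixes a :: "nat \<Rightarrow> real"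
  assumes lim: "(\<lambda>n. a n / real n) \<longlonglongrightarrow> m" and d: "\<delta> > 0"
  shows "\<exists>C. C \<ge> 0 \<and> (\<forall>n. \<bar>a n - m * real n\<bar> \<le> \<delta> * real n + C)"
proof -
  obtain N where N: "\<And>n. n \<ge> N \<Longrightarrow> \<bar>a n / real n - m\<bar> < \<delta>"
    using LIMSEQ_D[OF lim d] by auto
  define C where "C = (\<Sum>n<Suc N. \<bar>a n - m * real n\<bar>)"
  have "\<bar>a n - m * real n\<bar> \<le> \<delta> * real n + C" for n
  proof (cases "n \<le> N")
    case True
    hence "\<bar>a n - m * real n\<bar> \<le> C" unfolding C_def
      by (intro member_le_sum) auto
    thus ?thesis using d by (simp add: add_increasing)
  next
    case False
    hence np: "real n > 0" by simp
    have "\<bar>a n - m * real n\<bar> = real n * \<bar>a n / real n - m\<bar>"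
      using np by (simp add: field_simps abs_mult[symmetric])
    also have "\<dots> \<le> real n * \<delta>" using N[of n] False np by (intro mult_left_mono) auto
    finally show ?thesis by (simp add: C_def sum_nonneg mult.commute add_increasing2)
  qed
  moreover have "C \<ge> 0" unfolding C_def by (simp add: sum_nonneg)
  ultimately show ?thesis by blast
qed


lemma sum_pos_reindex:
  fixes g :: "int \<Rightarrow> real" and k :: int
  assumes "k \<ge> 0"
  shows "(\<Sum>j\<in>{1..k}. g j) = (\<Sum>i<nat k. g (int i + 1))"
proof -
  have e: "(\<lambda>i. int i + 1) ` {..<nat k} = {1..k}"
  proof (intro equalityI subsetI)
    fix x assume "x \<in> (\<lambda>i. int i + 1) ` {..<nat k}" thus "x \<in> {1..k}" by auto
  next
    fix x assume x: "x \<in> {1..k}"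
    hence "x = int (nat (x - 1)) + 1" "nat (x - 1) \<in> {..<nat k}" by auto
    thus "x \<in> (\<lambda>i. int i + 1) ` {..<nat k}" by (rule image_eqI)
  qed
  have "inj_on (\<lambda>i. int i + 1) {..<nat k}" by (auto simp: inj_on_def)
  thus ?thesis unfolding e[symmetric] by (simp add: sum.reindex)
qed

lemma sum_neg_reindex:
  fixes g :: "int \<Rightarrow> real" and k :: int
  assumes "k < 0"
  shows "(\<Sum>j\<in>{k+1..0}. g j) = (\<Sum>i<nat (-k). g (- int i))"
proof -
  have e: "(\<lambda>i. - int i) ` {..<nat (-k)} = {k+1..0}"
  proof (intro equalityI subsetI)
    fix x assume "x \<in> (\<lambda>i. - int i) ` {..<nat (-k)}" thus "x \<in> {k+1..0}" by auto
  next
    fix x assume x: "x \<in> {k+1..0}"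
    hence "x = - int (nat (- x))" "nat (- x) \<in> {..<nat (-k)}" by auto
    thus "x \<in> (\<lambda>i. - int i) ` {..<nat (-k)}" by (rule image_eqI)
  qed
  have "inj_on (\<lambda>i. - int i) {..<nat (-k)}" by (auto simp: inj_on_def)
  thus ?thesis unfolding e[symmetric] by (simp add: sum.reindex)
qed

lemma env_bound:
  fixes M :: "'a measure" and \<zeta> :: "int \<Rightarrow> 'a \<Rightarrow> real"
  assumes P: "prob_space M"
    and zeta_indep: "prob_space.indep_vars M (\<lambda>_. borel) \<zeta> UNIV"
    and zeta_ident: "\<And>j. distr M borel (\<zeta> j) = distr M borel (\<zeta> 0)"
    and zeta_pos: "\<And>j x. x \<in> space M \<Longrightarrow> \<zeta> j x > 0"
    and zeta_int: "integrable M (\<zeta> 0)"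
  shows "AE x in M. \<forall>\<delta>>0. \<exists>C. \<forall>k. \<bar>env \<zeta> x k - integral\<^sup>L M (\<zeta> 0) * real_of_int k\<bar> \<le> \<delta> * \<bar>real_of_int k\<bar> + C"
proof -
  interpret prob_space M by (rule P)
  define \<mu> where "\<mu> = integral\<^sup>L M (\<zeta> 0)"
  have rvz[measurable]: "\<zeta> j \<in> borel_measurable M" for j
    using zeta_indep unfolding indep_vars_def2 by auto
  have intz: "integrable M (\<zeta> j)" for j
  proof -
    have "integrable (distr M borel (\<zeta> 0)) (\<lambda>x. x)" using zeta_int by (subst integrable_distr_eq) auto
    hence "integrable (distr M borel (\<zeta> j)) (\<lambda>x. x)" by (metis zeta_ident)
    thus ?thesis by (subst (asm) integrable_distr_eq) auto
  qed
  have Ez: "integral\<^sup>L M (\<zeta> j) = \<mu>" for j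
  proof -
    have "integral\<^sup>L M (\<zeta> j) = integral\<^sup>L (distr M borel (\<zeta> j)) (\<lambda>x. x)" by (subst integral_distr) auto
    also have "\<dots> = integral\<^sup>L (distr M borel (\<zeta> 0)) (\<lambda>x. x)" by (metis zeta_ident)
    also have "\<dots> = \<mu>" unfolding \<mu>_def by (subst integral_distr) auto
    finally show ?thesis .
  qed
  interpret sp: slln M "\<lambda>i. \<zeta> (int i + 1)"
  proof
    show "indep_vars (\<lambda>_. borel) (\<lambda>i. \<zeta> (int i + 1)) UNIV"
      using indep_vars_reindex[OF zeta_indep, of "\<lambda>i. int i + 1" UNIV] by (simp add: inj_on_def)
    show "distr M borel (\<zeta> (int i + 1)) = distr M borel (\<zeta> (int 0 + 1))" for i by (metis zeta_ident)
    show "x \<in> space M \<Longrightarrow> 0 \<le> \<zeta> (int i + 1) x" for i x using zeta_pos[of x] by (simp add: less_imp_le)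
    show "integrable M (\<zeta> (int 0 + 1))" by (rule intz)
  qed
  interpret sm: slln M "\<lambda>i. \<zeta> (- int i)"
  proof
    show "indep_vars (\<lambda>_. borel) (\<lambda>i. \<zeta> (- int i)) UNIV"
      using indep_vars_reindex[OF zeta_indep, of "\<lambda>i. - int i" UNIV] by (simp add: inj_on_def)
    show "distr M borel (\<zeta> (- int i)) = distr M borel (\<zeta> (- int 0))" for i by (metis zeta_ident)
    show "x \<in> space M \<Longrightarrow> 0 \<le> \<zeta> (- int i) x" for i x using zeta_pos[of x] by (simp add: less_imp_le)
    show "integrable M (\<zeta> (- int 0))" by (rule intz)
  qed
  have "AE x in M. (\<lambda>n. (\<Sum>i<n. \<zeta> (int i + 1) x) / real n) \<longlonglongrightarrow> \<mu>"
    using sp.SLLN Ez[of "int 0 + 1"] by simp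
  moreover have "AE x in M. (\<lambda>n. (\<Sum>i<n. \<zeta> (- int i) x) / real n) \<longlonglongrightarrow> \<mu>"
    using sm.SLLN Ez[of "- int 0"] by simp
  ultimately show ?thesis unfolding \<mu>_def[symmetric]
  proof eventually_elim
    case (elim x)
    show ?case
    proof (intro allI impI)
      fix \<delta> :: real assume d: "\<delta> > 0"
      obtain C1 where C1: "C1 \<ge> 0" "\<And>n. \<bar>(\<Sum>i<n. \<zeta> (int i + 1) x) - \<mu> * real n\<bar> \<le> \<delta> * real n + C1"
        using det_bound[OF elim(1) d] by blast
      obtain C2 where C2: "C2 \<ge> 0" "\<And>n. \<bar>(\<Sum>i<n. \<zeta> (- int i) x) - \<mu> * real n\<bar> \<le> \<delta> * real n + C2"
        using det_bound[OF elim(2) d] by blast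
      have "\<bar>env \<zeta> x k - \<mu> * real_of_int k\<bar> \<le> \<delta> * \<bar>real_of_int k\<bar> + (C1 + C2)" for k
      proof (cases "k \<ge> 0")
        case True
        have "env \<zeta> x k = (\<Sum>i<nat k. \<zeta> (int i + 1) x)"
          using True by (simp add: env_def sum_pos_reindex[OF True, of "\<lambda>j. \<zeta> j x"])
        moreover have "real (nat k) = real_of_int k" "\<bar>real_of_int k\<bar> = real_of_int k" using True by auto
        ultimately show ?thesis using C1(2)[of "nat k"] C2(1) by simp
      next
        case False
        hence kn: "k < 0" by simp
        have "env \<zeta> x k = - (\<Sum>i<nat (-k). \<zeta> (- int i) x)"
          using kn by (simp add: env_def sum_neg_reindex[OF kn, of "\<lambda>j. \<zeta> j x"])
        moreover have "real (nat (-k)) = - real_of_int k" "\<bar>real_of_int k\<bar> = - real_of_int k" using kn by auto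
        ultimately show ?thesis using C2(2)[of "nat (-k)"] C1(1) by (simp add: abs_minus_commute)
      qed
      thus "\<exists>C. \<forall>k. \<bar>env \<zeta> x k - \<mu> * real_of_int k\<bar> \<le> \<delta> * \<bar>real_of_int k\<bar> + C" by blast
    qed
  qed
qed


lemma sum_1_n_shift: "(\<Sum>i\<in>{1..n}. g i) = (\<Sum>i<n. g (Suc i))"
  by (induction n) (auto simp: atLeastAtMostSuc_conv add.commute)

lemma walk_Suc: "walk \<xi> (Suc n) y = walk \<xi> n y + \<xi> (Suc n) y"
  by (simp add: walk_def atLeastAtMostSuc_conv)

lemma walk_clt:
  fixes N :: "'b measure" and \<xi> :: "nat \<Rightarrow> 'b \<Rightarrow> int" and p :: "int \<Rightarrow> real"
  assumes Q: "prob_space N"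
    and xi_indep: "prob_space.indep_vars N (\<lambda>_. count_space UNIV) \<xi> {1..}"
    and xi_law: "\<And>i k. i \<ge> 1 \<Longrightarrow> measure N {y \<in> space N. \<xi> i y = k} = p k"
    and p_sym: "\<And>k. p (-k) = p k"
    and p_sq_summable: "(\<lambda>k. real_of_int k ^ 2 * p k) summable_on UNIV"
    and p_sq_pos: "(\<Sum>\<^sub>\<infinity>k. real_of_int k ^ 2 * p k) > 0"
  shows "\<exists>\<sigma>>0. weak_conv_m (\<lambda>n. distr N borel (\<lambda>y. real_of_int (walk \<xi> n y) / sqrt (real n * \<sigma>\<^sup>2))) std_normal_distribution
    \<and> lim (\<lambda>n. integral\<^sup>L N (\<lambda>y. real_of_int (walk \<xi> n y) ^ 2) / real n) = \<sigma>\<^sup>2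
    \<and> (\<forall>n. walk \<xi> n \<in> measurable N (count_space UNIV))"
proof -
  interpret Q: prob_space N by (rule Q)
  have \<xi>m: "i \<ge> 1 \<Longrightarrow> \<xi> i \<in> measurable N (count_space UNIV)" for i
    using xi_indep unfolding Q.indep_vars_def2 by auto
  have \<xi>m'[measurable]: "\<xi> (Suc i) \<in> measurable N (count_space UNIV)" for i by (rule \<xi>m) simp
  have pnn: "p k \<ge> 0" for k using xi_law[of 1 k] by (metis order.refl measure_nonneg)
  define L where "L i = distr N (count_space UNIV) (\<xi> i)" for i
  have sing: "emeasure (distr N (count_space UNIV) f) {k} = ennreal (p k)"
    if fm: "f \<in> measurable N (count_space UNIV)" and fl: "measure N {y \<in> space N. f y = k} = p k" for f k
  proof -
    have "emeasure (distr N (count_space UNIV) f) {k} = emeasure N (f -` {k} \<inter> space N)"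
      by (rule emeasure_distr[OF fm]) simp
    also have "f -` {k} \<inter> space N = {y \<in> space N. f y = k}" by auto
    also have "emeasure N {y \<in> space N. f y = k} = ennreal (measure N {y \<in> space N. f y = k})"
      by (rule Q.emeasure_eq_measure)
    finally show ?thesis using fl by simp
  qed
  define D where "D = density (count_space UNIV) (\<lambda>k::int. ennreal (p k))"
  have LD: "L i = D" if "i \<ge> 1" for i
  proof (rule measure_eqI_countable[where A=UNIV])
    fix k :: int
    show "emeasure (L i) {k} = emeasure D {k}"
      unfolding L_def D_def using sing[OF \<xi>m[OF that] xi_law[OF that]]
      by (simp add: emeasure_density nn_integral_count_space_indicator)
  qed (auto simp: L_def D_def)
  have negD: "distr N (count_space UNIV) (\<lambda>y. - \<xi> 1 y) = D"
  proof (rule measure_eqI_countable[where A=UNIV])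
    fix k :: int
    have "measure N {y \<in> space N. - \<xi> 1 y = k} = p k"
      using xi_law[of 1 "-k"] p_sym[of k] by (simp add: minus_equation_iff[of _ k] eq_commute[of "-k"])
    hence "emeasure (distr N (count_space UNIV) (\<lambda>y. - \<xi> 1 y)) {k} = ennreal (p k)"
      by (intro sing) (use \<xi>m[of 1] in auto)
    thus "emeasure (distr N (count_space UNIV) (\<lambda>y. - \<xi> 1 y)) {k} = emeasure D {k}"
      unfolding D_def by (simp add: emeasure_density nn_integral_count_space_indicator)
  qed (auto simp: D_def)
  have intg: "(\<integral>y. g (\<xi> i y) \<partial>N) = integral\<^sup>L D g" if "i \<ge> 1" for g :: "int \<Rightarrow> real" and i
  proof -
    have "(\<integral>y. g (\<xi> i y) \<partial>N) = integral\<^sup>L (L i) g"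
      unfolding L_def by (rule integral_distr[symmetric, OF \<xi>m[OF that]]) simp
    thus ?thesis using LD[OF that] by simp
  qed
  have intgi: "integrable N (\<lambda>y. g (\<xi> i y)) \<longleftrightarrow> integrable D g" if "i \<ge> 1" for g :: "int \<Rightarrow> real" and i
  proof -
    have "integrable N (\<lambda>y. g (\<xi> i y)) \<longleftrightarrow> integrable (L i) g"
      unfolding L_def by (rule integrable_distr_eq[symmetric, OF \<xi>m[OF that]]) simp
    thus ?thesis using LD[OF that] by simp
  qed
  have "(\<lambda>k. norm (p k * (real_of_int k)\<^sup>2)) summable_on UNIV"
    using p_sq_summable pnn by (simp add: abs_mult mult.commute)
  hence "integrable (count_space UNIV) (\<lambda>k. p k * (real_of_int k)\<^sup>2)"
    using abs_summable_equivalent[of "\<lambda>k. p k * (real_of_int k)\<^sup>2" UNIV] unfolding abs_summable_on_def by simp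
  hence Dsq: "integrable D (\<lambda>k. (real_of_int k)\<^sup>2)"
    unfolding D_def using pnn by (subst integrable_density) auto
  hence Dint: "integrable D (\<lambda>k. real_of_int k)"
  proof -
    interpret D: prob_space D unfolding D_def[symmetric] using LD[of 1] L_def
      by (metis Q.prob_space_distr \<xi>m order.refl)
    show ?thesis by (rule D.square_integrable_imp_integrable[OF _ Dsq]) (simp add: D_def)
  qed
  define X where "X i y = real_of_int (\<xi> (Suc i) y)" for i y
  have Xm[measurable]: "X i \<in> borel_measurable N" for i unfolding X_def by measurable
  have Xind: "Q.indep_vars (\<lambda>_. borel) X UNIV"
  proof -
    have "Q.indep_vars (\<lambda>_. count_space UNIV) (\<lambda>i. \<xi> (Suc i)) UNIV"
      using Q.indep_vars_reindex[OF xi_indep, of Suc UNIV] by auto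
    hence "Q.indep_vars (\<lambda>_. borel) (\<lambda>i y. real_of_int (\<xi> (Suc i) y)) UNIV"
      by (rule Q.indep_vars_compose2) simp
    thus ?thesis unfolding X_def[abs_def] .
  qed
  have Xsq: "integrable N (\<lambda>y. (X i y)\<^sup>2)" for i
    unfolding X_def using intgi[of "Suc i" "\<lambda>k. (real_of_int k)\<^sup>2"] Dsq by simp
  have EX2: "Q.expectation (\<lambda>y. (X i y)\<^sup>2) = integral\<^sup>L D (\<lambda>k. (real_of_int k)\<^sup>2)" for i
    unfolding X_def using intg[of "Suc i" "\<lambda>k. (real_of_int k)\<^sup>2"] by simp
  have E1: "integral\<^sup>L D (\<lambda>k. real_of_int k) = 0"
  proof -
    have "integral\<^sup>L D (\<lambda>k. real_of_int k) = (\<integral>y. real_of_int (- \<xi> 1 y) \<partial>N)"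
      unfolding negD[symmetric] by (subst integral_distr) (use \<xi>m[of 1] in auto)
    also have "\<dots> = - (\<integral>y. real_of_int (\<xi> 1 y) \<partial>N)" by simp
    also have "(\<integral>y. real_of_int (\<xi> 1 y) \<partial>N) = integral\<^sup>L D (\<lambda>k. real_of_int k)" by (rule intg) simp
    finally show ?thesis by simp
  qed
  have EX: "Q.expectation (X i) = 0" for i
    unfolding X_def using intg[of "Suc i" "\<lambda>k. real_of_int k"] E1 by simp
  define s2 where "s2 = integral\<^sup>L D (\<lambda>k. (real_of_int k)\<^sup>2)"
  have s2pos: "s2 > 0"
  proof (rule ccontr)
    assume "\<not> s2 > 0"
    moreover have "s2 \<ge> 0" unfolding s2_def by simp
    ultimately have "s2 = 0" by linarith
    hence "Q.expectation (\<lambda>y. (X 0 y)\<^sup>2) = 0" using EX2[of 0] unfolding s2_def by simp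
    hence "AE y in N. (X 0 y)\<^sup>2 = 0" using Xsq[of 0] by (subst (asm) integral_nonneg_eq_0_iff_AE) auto
    hence ae: "AE y in N. \<xi> 1 y = 0" by (simp add: X_def)
    have "p k = 0" if "k \<noteq> 0" for k
    proof -
      have "emeasure N {y \<in> space N. \<xi> 1 y = k} = 0"
        by (rule emeasure_eq_0_AE) (use ae that in \<open>auto elim: AE_mp\<close>)
      thus ?thesis using xi_law[of 1 k] by (simp add: Q.emeasure_eq_measure)
    qed
    hence "(\<lambda>k. real_of_int k ^ 2 * p k) = (\<lambda>_. 0)" by (auto simp: fun_eq_iff)
    thus False using p_sq_pos by simp
  qed
  define \<sigma> where "\<sigma> = sqrt s2"
  have \<sigma>p: "\<sigma> > 0" and \<sigma>2: "\<sigma>\<^sup>2 = s2" using s2pos by (auto simp: \<sigma>_def)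
  have Xvar: "Q.variance (X n) = \<sigma>\<^sup>2" for n using EX EX2 \<sigma>2 s2_def by simp
  have Xdistr: "distr N borel (X n) = distr N borel (X 0)" for n
  proof -
    have "distr N borel (X n) = distr (L (Suc n)) borel real_of_int"
      unfolding L_def X_def[abs_def] by (subst distr_distr) (auto simp: comp_def)
    also have "\<dots> = distr (L (Suc 0)) borel real_of_int" using LD by simp
    also have "\<dots> = distr N borel (X 0)"
      unfolding L_def X_def[abs_def] by (subst distr_distr) (auto simp: comp_def)
    finally show ?thesis .
  qed
  have clt: "weak_conv_m (\<lambda>n. distr N borel (\<lambda>y. (\<Sum>i<n. X i y) / sqrt (real n * \<sigma>\<^sup>2))) std_normal_distribution"
    by (rule Q.central_limit_theorem_zero_mean[OF Xind EX \<sigma>p Xsq Xvar Xdistr])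
  have wsum: "real_of_int (walk \<xi> n y) = (\<Sum>i<n. X i y)" for n y
    by (simp only: walk_def X_def of_int_sum sum_1_n_shift)
  have clt': "weak_conv_m (\<lambda>n. distr N borel (\<lambda>y. real_of_int (walk \<xi> n y) / sqrt (real n * \<sigma>\<^sup>2))) std_normal_distribution"
    using clt by (simp add: wsum)
  have ES: "integral\<^sup>L N (\<lambda>y. real_of_int (walk \<xi> n y) ^ 2) = real n * \<sigma>\<^sup>2" for n
    using Q.sum_sq_indep2[OF Xind Xsq EX, of n] EX2 \<sigma>2 s2_def by (simp add: wsum)
  have "(\<lambda>n. integral\<^sup>L N (\<lambda>y. real_of_int (walk \<xi> n y) ^ 2) / real n) \<longlonglongrightarrow> \<sigma>\<^sup>2"
  proof (rule tendsto_eventually)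
    show "eventually (\<lambda>n. integral\<^sup>L N (\<lambda>y. real_of_int (walk \<xi> n y) ^ 2) / real n = \<sigma>\<^sup>2) sequentially"
      using eventually_gt_at_top[of "0::nat"] by eventually_elim (simp add: ES)
  qed
  hence lim: "lim (\<lambda>n. integral\<^sup>L N (\<lambda>y. real_of_int (walk \<xi> n y) ^ 2) / real n) = \<sigma>\<^sup>2" by (rule limI)
  have wm: "walk \<xi> n \<in> measurable N (count_space UNIV)" for n
  proof (induction n)
    case 0 thus ?case by (simp add: walk_def)
  next
    case (Suc n)
    have "(\<lambda>y. walk \<xi> n y + \<xi> (Suc n) y) \<in> measurable N (count_space UNIV)"
    proof (rule measurable_compose_countable[where f="\<lambda>i y. i + \<xi> (Suc n) y" and g="walk \<xi> n"])
      fix i :: int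
      show "(\<lambda>y. i + \<xi> (Suc n) y) \<in> measurable N (count_space UNIV)"
        using measurable_compose[OF \<xi>m'[of n], of "\<lambda>k. i + k" "count_space UNIV"] by simp
    qed (rule Suc)
    thus ?case by (simp add: walk_Suc[abs_def])
  qed
  show ?thesis using \<sigma>p clt' lim wm by blast
qed


theorem proposition3p1:
  fixes M :: "'a measure" and \<zeta> :: "int \<Rightarrow> 'a \<Rightarrow> real" and \<mu> :: real
    and N :: "'b measure" and \<xi> :: "nat \<Rightarrow> 'b \<Rightarrow> int" and p :: "int \<Rightarrow> real" and m2 :: real
  assumes P: "prob_space M"
    and zeta_indep: "prob_space.indep_vars M (\<lambda>_. borel) \<zeta> UNIV"
    and zeta_ident: "\<And>j. distr M borel (\<zeta> j) = distr M borel (\<zeta> 0)"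
    and zeta_pos: "\<And>j x. x \<in> space M \<Longrightarrow> \<zeta> j x > 0"
    and zeta_int: "integrable M (\<zeta> 0)"
    and mu: "\<mu> = integral\<^sup>L M (\<zeta> 0)"
    and Q: "prob_space N"
    and xi_indep: "prob_space.indep_vars N (\<lambda>_. count_space UNIV) \<xi> {1..}"
    and xi_law: "\<And>i k. i \<ge> 1 \<Longrightarrow> measure N {y \<in> space N. \<xi> i y = k} = p k"
    and p_sym: "\<And>k. p (-k) = p k"
    and p_mono: "\<And>k. k \<ge> 0 \<Longrightarrow> p (k + 1) \<le> p k"
    and p_sq_summable: "(\<lambda>k. real_of_int k ^ 2 * p k) summable_on UNIV"
    and p_sq_pos: "(\<Sum>\<^sub>\<infinity>k. real_of_int k ^ 2 * p k) > 0"
    and m2: "m2 = lim (\<lambda>n. integral\<^sup>L N (\<lambda>y. real_of_int (walk \<xi> n y) ^ 2) / real n)"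
  shows "AE x in M. weak_conv_m
           (\<lambda>n. distr N borel (\<lambda>y. env \<zeta> x (walk \<xi> n y) / sqrt (real n)))
           (density lborel (normal_density 0 (sqrt (\<mu>\<^sup>2 * m2))))"
proof -
  interpret P: prob_space M by (rule P)
  obtain \<sigma> where \<sigma>: "\<sigma> > 0"
    and clt: "weak_conv_m (\<lambda>n. distr N borel (\<lambda>y. real_of_int (walk \<xi> n y) / sqrt (real n * \<sigma>\<^sup>2))) std_normal_distribution"
    and lim: "lim (\<lambda>n. integral\<^sup>L N (\<lambda>y. real_of_int (walk \<xi> n y) ^ 2) / real n) = \<sigma>\<^sup>2"
    and wm: "\<And>n. walk \<xi> n \<in> measurable N (count_space UNIV)"
    using walk_clt[OF Q xi_indep xi_law p_sym p_sq_summable p_sq_pos] by blast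
  have m2s: "m2 = \<sigma>\<^sup>2" using m2 lim by simp
  have zm[measurable]: "\<zeta> 0 \<in> borel_measurable M"
    using zeta_indep unfolding P.indep_vars_def2 by auto
  have \<mu>pos: "\<mu> > 0"
  proof (rule ccontr)
    assume "\<not> \<mu> > 0"
    moreover have "\<mu> \<ge> 0" unfolding mu using zeta_pos by (intro integral_nonneg_AE AE_I2 less_imp_le) auto
    ultimately have "integral\<^sup>L M (\<zeta> 0) = 0" using mu by simp
    hence "AE x in M. \<zeta> 0 x = 0" using zeta_int zeta_pos
      by (subst (asm) integral_nonneg_eq_0_iff_AE) (auto intro!: AE_I2 less_imp_le)
    hence "AE x in M. False" using AE_space by eventually_elim (metis zeta_pos less_irrefl)
    thus False by simp
  qed
  have sq: "sqrt (\<mu>\<^sup>2 * m2) = \<mu> * \<sigma>" using \<mu>pos \<sigma> by (simp add: m2s real_sqrt_mult)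
  have "AE x in M. \<forall>\<delta>>0. \<exists>C. \<forall>k. \<bar>env \<zeta> x k - \<mu> * real_of_int k\<bar> \<le> \<delta> * \<bar>real_of_int k\<bar> + C"
    using env_bound[OF P zeta_indep zeta_ident zeta_pos zeta_int] unfolding mu .
  thus ?thesis unfolding sq
  proof (rule AE_mp[OF _ AE_I2], intro impI)
    fix x assume fb: "\<forall>\<delta>>0. \<exists>C. \<forall>k. \<bar>env \<zeta> x k - \<mu> * real_of_int k\<bar> \<le> \<delta> * \<bar>real_of_int k\<bar> + C"
    show "weak_conv_m (\<lambda>n. distr N borel (\<lambda>y. env \<zeta> x (walk \<xi> n y) / sqrt (real n)))
        (density lborel (normal_density 0 (\<mu> * \<sigma>)))"
      by (rule quenched_weak_conv[OF Q wm clt \<sigma> \<mu>pos]) (use fb in blast)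
  qed
qed


end
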